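(* In the continuous scenario with constant request rate $\lambda$ over $\mathcal X$, for any cache state $\mathcal S$, \[ \bar C(\mathcal S) \ge \lambda k F\left(\frac{|\mathcal X|}{k}\right). \]
   Context: $\mathcal X$ is a bounded (compact) subset of $\mathbb R^p$, a cache holds $k$ objects, $C_a(x,y)=h(\|x-y\|)$ with $h:\mathbb R^+\to\mathbb R^+$ non-decreasing and $\|\cdot\|$ a norm, $C_r>0$ is the retrieval cost, $C(x,y)=\min(C_a(x,y),C_r)$ and $C(x,\mathcal S)=\min(\inf_{y\in\mathcal S}C_a(x,y),C_r)$. Requests have constant spatial density $\lambda$ over $\mathcal X$, and the expected cost of cache state $\mathcal S$ is $\bar C(\mathcal S)=\int_{\mathcal X}\lambda\,C(x,\mathcal S)\,dx$. $|\mathcal A|$ denotes the volume (Lebesgue measure) of $\mathcal A$, $\mathcal B(y,v)$ the ball of volume $v$ centered in $y$, and $F(v)=\int_{\mathcal B(y,v)}C(x,y)\,dx$ (independent of $y$). *)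

theory Defs
  imports "HOL-Analysis.Analysis"
begin

definition is_norm :: "('a::euclidean_space \<Rightarrow> real) \<Rightarrow> bool" where
  "is_norm N \<longleftrightarrow> (\<forall>x. N x \<ge> 0) \<and> (\<forall>x. N x = 0 \<longleftrightarrow> x = 0)
     \<and> (\<forall>c x. N (c *\<^sub>R x) = \<bar>c\<bar> * N x) \<and> (\<forall>x y. N (x + y) \<le> N x + N y)"

definition nball :: "('a::euclidean_space \<Rightarrow> real) \<Rightarrow> 'a \<Rightarrow> real \<Rightarrow> 'a set" where
  "nball N y r = {x. N (x - y) \<le> r}"

definition vball :: "('a::euclidean_space \<Rightarrow> real) \<Rightarrow> 'a \<Rightarrow> real \<Rightarrow> 'a set" where
  "vball N y v = nball N y (SOME r. r \<ge> 0 \<and> measure lebesgue (nball N y r) = v)"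

definition cost :: "(real \<Rightarrow> real) \<Rightarrow> ('a::euclidean_space \<Rightarrow> real) \<Rightarrow> real \<Rightarrow> 'a \<Rightarrow> 'a \<Rightarrow> real" where
  "cost h N Cr x y = min (h (N (x - y))) Cr"

definition cost_set :: "(real \<Rightarrow> real) \<Rightarrow> ('a::euclidean_space \<Rightarrow> real) \<Rightarrow> real \<Rightarrow> 'a \<Rightarrow> 'a set \<Rightarrow> real" where
  "cost_set h N Cr x S = min (INF y\<in>S. h (N (x - y))) Cr"

definition exp_cost :: "(real \<Rightarrow> real) \<Rightarrow> ('a::euclidean_space \<Rightarrow> real) \<Rightarrow> real \<Rightarrow> real \<Rightarrow> 'a set \<Rightarrow> 'a set \<Rightarrow> real" where
  "exp_cost h N Cr lam X S = (LINT x:X|lebesgue. lam * cost_set h N Cr x S)"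

text \<open>F(v) = integral over the ball of volume v centred at y of C(x,y); the paper notes it is
  independent of y, we take y = 0.\<close>
definition Fvol :: "(real \<Rightarrow> real) \<Rightarrow> ('a::euclidean_space \<Rightarrow> real) \<Rightarrow> real \<Rightarrow> real \<Rightarrow> real" where
  "Fvol h N Cr v = (LINT x:vball N 0 v|lebesgue. cost h N Cr x 0)"

end

theory Submission
  imports Defs
begin

lemma norm_basic:
  assumes "is_norm N"
  shows "N 0 = 0" "N (- x) = N x" "N x \<ge> 0" "N (x + y) \<le> N x + N y" "N (c *\<^sub>R x) = \<bar>c\<bar> * N x"
    "N x = 0 \<longleftrightarrow> x = 0"
proof -
  show N0: "N 0 = 0" proof -
    have "N ((0::real) *\<^sub>R 0) = \<bar>0::real\<bar> * N 0" using assms unfolding is_norm_def by blast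
    then show ?thesis by simp
  qed
  show "N x = 0 \<longleftrightarrow> x = 0" using assms unfolding is_norm_def by blast
  show "N (- x) = N x" using assms unfolding is_norm_def by (metis abs_minus_cancel abs_one mult_cancel_right1 scaleR_minus1_left)
  show "N x \<ge> 0" "N (x + y) \<le> N x + N y" "N (c *\<^sub>R x) = \<bar>c\<bar> * N x"
    using assms unfolding is_norm_def by blast+
qed

lemma norm_sum_le:
  assumes "is_norm N" "finite A"
  shows "N (sum f A) \<le> (\<Sum>i\<in>A. N (f i))"
  using assms(2)
proof induction
  case empty then show ?case using norm_basic(1)[OF assms(1)] by simp
next
  case (insert a A)
  then show ?case using norm_basic(4)[OF assms(1), of "f a" "sum f A"] by simp
qed

lemma norm_upper:
  assumes "is_norm N"
  shows "N x \<le> (\<Sum>b\<in>Basis. N b) * norm x"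
proof -
  have "N x = N (\<Sum>b\<in>Basis. (x \<bullet> b) *\<^sub>R b)" by (simp add: euclidean_representation)
  also have "\<dots> \<le> (\<Sum>b\<in>Basis. N ((x \<bullet> b) *\<^sub>R b))" by (rule norm_sum_le[OF assms]) simp
  also have "\<dots> = (\<Sum>b\<in>Basis. \<bar>x \<bullet> b\<bar> * N b)" using norm_basic(5)[OF assms] by simp
  also have "\<dots> \<le> (\<Sum>b\<in>Basis. norm x * N b)"
    by (intro sum_mono mult_right_mono Basis_le_norm norm_basic(3)[OF assms])
  finally show ?thesis by (simp add: sum_distrib_right[symmetric] mult.commute)
qed

lemma norm_cont:
  assumes "is_norm N"
  shows "continuous_on UNIV N"
proof -
  let ?M = "\<Sum>b\<in>Basis. N b"
  have M0: "?M \<ge> 0" by (intro sum_nonneg norm_basic(3)[OF assms])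
  have "?M-lipschitz_on UNIV N"
  proof (rule lipschitz_onI[OF _ M0])
    fix x y :: 'a
    have "N x \<le> N y + N (x - y)" using norm_basic(4)[OF assms, of y "x - y"] by simp
    moreover have "N y \<le> N x + N (y - x)" using norm_basic(4)[OF assms, of x "y - x"] by simp
    moreover have "N (y - x) = N (x - y)" using norm_basic(2)[OF assms, of "x - y"] by simp
    moreover have "N (x - y) \<le> ?M * dist x y" using norm_upper[OF assms, of "x - y"] by (simp add: dist_norm)
    ultimately show "dist (N x) (N y) \<le> ?M * dist x y" by (simp add: dist_real_def abs_le_iff)
  qed
  then show ?thesis by (rule lipschitz_on_continuous_on)
qed

lemma norm_lower:
  assumes "is_norm N"
  obtains m where "m > 0" "\<And>x. N x \<ge> m * norm x"
proof -
  obtain b :: 'a where b: "b \<in> Basis" using nonempty_Basis by blast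
  have "sphere (0::'a) 1 \<noteq> {}" using b by (auto intro!: exI[of _ b])
  then obtain x0 where x0: "x0 \<in> sphere 0 1" "\<And>y. y \<in> sphere 0 1 \<Longrightarrow> N x0 \<le> N y"
    using continuous_attains_inf[OF compact_sphere _ continuous_on_subset[OF norm_cont[OF assms]]] by blast
  have "x0 \<noteq> 0" using x0(1) by auto
  then have m: "N x0 > 0" using norm_basic(3,6)[OF assms, of x0] by auto
  have "N x \<ge> N x0 * norm x" for x
  proof (cases "x = 0")
    case True then show ?thesis using norm_basic(3)[OF assms] by simp
  next
    case False
    have "N x = N (norm x *\<^sub>R (x /\<^sub>R norm x))" using False by simp
    also have "\<dots> = norm x * N (x /\<^sub>R norm x)" using norm_basic(5)[OF assms] by simp
    also have "\<dots> \<ge> norm x * N x0" using x0(2)[of "x /\<^sub>R norm x"] False by (intro mult_left_mono) auto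
    finally show ?thesis by (simp add: mult.commute)
  qed
  with m that show ?thesis by blast
qed


lemma nball0: "nball N 0 r = {x. N x \<le> r}" by (simp add: nball_def)

lemma nball_compact:
  assumes "is_norm N"
  shows "compact (nball N (0::'a::euclidean_space) r)"
proof -
  obtain m where m: "m > 0" "\<And>x::'a. N x \<ge> m * norm x" using norm_lower[OF assms] by blast
  have "closed {x::'a. N x \<le> r}"
    by (rule closed_Collect_le[OF norm_cont[OF assms] continuous_on_const])
  moreover have "{x::'a. N x \<le> r} \<subseteq> cball 0 (r / m)"
  proof
    fix x :: 'a assume "x \<in> {x. N x \<le> r}"
    then have "m * norm x \<le> r" using m(2)[of x] by simp
    then show "x \<in> cball 0 (r / m)" using m(1) by (simp add: field_simps)
  qed
  ultimately show ?thesis unfolding nball0 compact_eq_bounded_closed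
    using bounded_cball bounded_subset by blast
qed

lemma nball_scale:
  assumes "is_norm N" "r > 0"
  shows "nball N (0::'a::euclidean_space) r = (\<lambda>x. r *\<^sub>R x + 0) ` nball N 0 1"
proof
  show "nball N 0 r \<subseteq> (\<lambda>x. r *\<^sub>R x + 0) ` nball N 0 1"
  proof
    fix z :: 'a assume z: "z \<in> nball N 0 r"
    have "N (z /\<^sub>R r) = N z / r" using norm_basic(5)[OF assms(1), of "inverse r" z] assms(2) by (simp add: field_simps)
    also have "\<dots> \<le> 1" using z assms(2) by (simp add: nball0)
    finally have "z /\<^sub>R r \<in> nball N 0 1" by (simp add: nball0)
    moreover have "z = r *\<^sub>R (z /\<^sub>R r) + 0" using assms(2) by simp
    ultimately show "z \<in> (\<lambda>x. r *\<^sub>R x + 0) ` nball N 0 1" by blast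
  qed
  show "(\<lambda>x. r *\<^sub>R x + 0) ` nball N 0 1 \<subseteq> nball N 0 r"
  proof
    fix z assume "z \<in> (\<lambda>x. r *\<^sub>R x + 0) ` nball N (0::'a) 1"
    then obtain x where x: "N x \<le> 1" "z = r *\<^sub>R x" by (auto simp: nball0)
    then have "N z = r * N x" using norm_basic(5)[OF assms(1)] assms(2) by simp
    also have "\<dots> \<le> r" using x(1) assms(2) by (simp add: mult_le_cancel_left1)
    finally show "z \<in> nball N 0 r" by (simp add: nball0)
  qed
qed

lemma nball_measure:
  assumes "is_norm N" "r \<ge> 0"
  shows "measure lebesgue (nball N (0::'a::euclidean_space) r) = r ^ DIM('a) * measure lebesgue (nball N (0::'a) 1)"
proof (cases "r = 0")
  case True
  have "N x \<le> 0 \<longleftrightarrow> x = 0" for x :: 'a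
    using norm_basic(3,6)[OF assms(1), of x] by (metis order.antisym order.refl)
  then have "nball N (0::'a) 0 = {0}" by (auto simp: nball0)
  then show ?thesis using True by simp
next
  case False
  then have "r > 0" using assms(2) by simp
  show ?thesis unfolding nball_scale[OF assms(1) \<open>r > 0\<close>]
    using measure_lebesgue_affine[of r 0 "nball N (0::'a) 1"] \<open>r > 0\<close> by simp
qed

lemma nball_unit_pos:
  assumes "is_norm N"
  shows "measure lebesgue (nball N (0::'a::euclidean_space) 1) > 0"
proof -
  let ?M = "\<Sum>b\<in>(Basis::'a set). N b"
  obtain b :: 'a where b: "b \<in> Basis" using nonempty_Basis by blast
  have "N b > 0" using norm_basic(3,6)[OF assms, of b] b by auto
  then have M: "?M > 0"
    using sum_nonneg_leq_bound[of Basis N ?M b] norm_basic(3)[OF assms] b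
    by (metis finite_Basis less_le_trans order.refl sum_nonneg_eq_0_iff order_less_le)
  have sub: "ball (0::'a) (1 / ?M) \<subseteq> nball N 0 1"
  proof
    fix x :: 'a assume "x \<in> ball 0 (1 / ?M)"
    then have "norm x < 1 / ?M" by simp
    then have "?M * norm x \<le> 1" using M by (simp add: field_simps)
    then show "x \<in> nball N 0 1" using norm_upper[OF assms, of x] by (simp add: nball0)
  qed
  have "0 < measure lborel (ball (0::'a) (1 / ?M))" using M by (metis content_ball_pos divide_pos_pos zero_less_one)
  also have "\<dots> = measure lebesgue (ball (0::'a) (1 / ?M))" by simp
  also have "\<dots> \<le> measure lebesgue (nball N (0::'a) 1)"
    by (rule measure_mono_fmeasurable[OF sub]) (auto intro: lmeasurable_compact nball_compact[OF assms])
  finally show ?thesis .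
qed

lemma radius_exists:
  assumes "is_norm N" "v \<ge> 0"
  shows "\<exists>r. r \<ge> 0 \<and> measure lebesgue (nball N (0::'a::euclidean_space) r) = v"
proof -
  let ?c = "measure lebesgue (nball N (0::'a) 1)"
  have c: "?c > 0" by (rule nball_unit_pos[OF assms(1)])
  define r where "r = root DIM('a) (v / ?c)"
  have r0: "r \<ge> 0" using assms(2) c by (simp add: r_def)
  have "r ^ DIM('a) = v / ?c" unfolding r_def using assms(2) c by (simp add: real_root_pow_pos2)
  then have "measure lebesgue (nball N (0::'a) r) = v" using nball_measure[OF assms(1) r0] c by simp
  with r0 show ?thesis by blast
qed


theorem theorem8:
  fixes X S :: "'a::euclidean_space set" and h :: "real \<Rightarrow> real" and N :: "'a \<Rightarrow> real"
    and Cr lam :: real and k :: nat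
  assumes "compact X"
    and "is_norm N"
    and "\<forall>t\<ge>0. h t \<ge> 0" and "mono_on {0..} h"
    and "Cr > 0" and "lam > 0"
    and "k \<ge> 1" and "finite S" and "card S = k" and "S \<subseteq> X"
  shows "exp_cost h N Cr lam X S \<ge> lam * real k * Fvol h N Cr (measure lebesgue X / real k)"
proof -
  note nN = assms(2)
  let ?v = "measure lebesgue X / real k"
  have v0: "?v \<ge> 0" by simp
  define \<rho> where "\<rho> = (SOME r. r \<ge> 0 \<and> measure lebesgue (nball N (0::'a) r) = ?v)"
  have \<rho>: "\<rho> \<ge> 0 \<and> measure lebesgue (nball N (0::'a) \<rho>) = ?v"
    unfolding \<rho>_def by (rule someI_ex[OF radius_exists[OF nN v0]])
  define B where "B = nball N (0::'a) \<rho>"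
  have vB: "vball N 0 ?v = B" by (simp add: vball_def B_def \<rho>_def)
  define \<phi> where "\<phi> z = min (h (N z)) Cr" for z
  define \<tau> where "\<tau> = min (h \<rho>) Cr"
  have Bc: "compact B" unfolding B_def by (rule nball_compact[OF nN])
  have Bs[measurable]: "B \<in> sets borel" using Bc by (simp add: borel_compact)
  have Xs[measurable]: "X \<in> sets borel" using assms(1) by (simp add: borel_compact)
  have measB: "measure lborel B = ?v" using \<rho> Bs by (simp add: B_def)
  have measX: "measure lborel X = measure lebesgue X" using Xs by simp
  have Nge: "N z \<ge> 0" for z using norm_basic(3)[OF nN] .
  have \<phi>in: "\<phi> z \<le> \<tau>" if "z \<in> B" for z
  proof -
    have "N z \<le> \<rho>" using that by (simp add: B_def nball0)
    then have "h (N z) \<le> h \<rho>" using assms(4) Nge[of z] \<rho> by (intro mono_onD[OF assms(4)]) auto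
    then show ?thesis by (auto simp: \<phi>_def \<tau>_def)
  qed
  have \<phi>out: "\<phi> z \<ge> \<tau>" if "z \<notin> B" for z
  proof -
    have "N z \<ge> \<rho>" using that by (simp add: B_def nball0)
    then have "h (N z) \<ge> h \<rho>" using assms(4) Nge[of z] \<rho> by (intro mono_onD[OF assms(4)]) auto
    then show ?thesis by (auto simp: \<phi>_def \<tau>_def)
  qed
  have \<phi>bnd: "0 \<le> \<phi> z" "\<phi> z \<le> Cr" for z using assms(3,5) Nge[of z] by (auto simp: \<phi>_def)
  have hN_meas[measurable]: "(\<lambda>z. h (N z)) \<in> borel_measurable borel"
  proof -
    have m1: "(\<lambda>t. h (max t 0)) \<in> borel_measurable borel"
      by (rule borel_measurable_mono) (auto intro!: monoI mono_onD[OF assms(4)])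
    have m2: "N \<in> borel_measurable borel" by (rule borel_measurable_continuous_onI[OF norm_cont[OF nN]])
    have "(\<lambda>z. h (max (N z) 0)) \<in> borel_measurable borel"
      using measurable_compose[OF m2 m1] by (simp add: o_def)
    moreover have "(\<lambda>z. h (max (N z) 0)) = (\<lambda>z. h (N z))" using Nge by (simp add: max_absorb1)
    ultimately show ?thesis by simp
  qed
  have \<phi>_meas[measurable]: "\<phi> \<in> borel_measurable borel" unfolding \<phi>_def[abs_def] by measurable
  have hNy_meas[measurable]: "(\<lambda>x. h (N (x - y))) \<in> borel_measurable borel" for y
    using measurable_compose[OF _ hN_meas, of "\<lambda>x. x - y"] by (simp add: o_def)
  define cs where "cs x = cost_set h N Cr x S" for x
  have Sne: "S \<noteq> {}" using assms(7,9) by auto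
  have cs_eq: "cs x = min (Min ((\<lambda>y. h (N (x - y))) ` S)) Cr" for x
    unfolding cs_def cost_set_def using Sne assms(8) by (simp add: cInf_eq_Min)
  have cs_att: "\<exists>y0\<in>S. cs x = \<phi> (x - y0)" for x
  proof -
    have "Min ((\<lambda>y. h (N (x - y))) ` S) \<in> (\<lambda>y. h (N (x - y))) ` S"
      using Sne assms(8) by (intro Min_in) auto
    then obtain y0 where "y0 \<in> S" "Min ((\<lambda>y. h (N (x - y))) ` S) = h (N (x - y0))" by auto
    then show ?thesis by (auto simp: cs_eq \<phi>_def)
  qed
  have cs_meas[measurable]: "cs \<in> borel_measurable borel"
    unfolding cs_eq[abs_def] using assms(8) by measurable
  define g where "g y x = min (\<phi> (x - y) - \<tau>) 0" for y x
  have g_meas[measurable]: "g y \<in> borel_measurable borel" for y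
    unfolding g_def[abs_def] by measurable
  have pw: "cs x - \<tau> \<ge> (\<Sum>y\<in>S. g y x)" for x
  proof -
    obtain y0 where y0: "y0 \<in> S" "cs x = \<phi> (x - y0)" using cs_att by blast
    have "(\<Sum>y\<in>S. g y x) = g y0 x + (\<Sum>y\<in>S - {y0}. g y x)"
      using y0(1) assms(8) by (simp add: sum.remove)
    also have "\<dots> \<le> g y0 x"
    proof -
      have "(\<Sum>y\<in>S - {y0}. g y x) \<le> 0" by (rule sum_nonpos) (simp add: g_def)
      then show ?thesis by linarith
    qed
    also have "\<dots> \<le> cs x - \<tau>" using y0(2) by (simp add: g_def)
    finally show ?thesis .
  qed
  define G where "G z = indicator B z * (\<phi> z - \<tau>)" for z
  have G_meas[measurable]: "G \<in> borel_measurable borel" unfolding G_def[abs_def] by measurable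
  have pw2: "G (x - y) \<le> indicator X x * g y x" for x y
  proof (cases "x - y \<in> B")
    case True
    then have "\<phi> (x - y) \<le> \<tau>" by (rule \<phi>in)
    then show ?thesis using True by (cases "x \<in> X") (auto simp: G_def g_def)
  next
    case False
    then have "\<phi> (x - y) \<ge> \<tau>" by (rule \<phi>out)
    then show ?thesis using False by (cases "x \<in> X") (auto simp: G_def g_def)
  qed
  have Xfin: "emeasure lborel X < \<infinity>" by (rule emeasure_compact_finite[OF assms(1)])
  have Bfin: "emeasure lborel B < \<infinity>" by (rule emeasure_compact_finite[OF Bc])
  have int_cs: "integrable lborel (\<lambda>x. indicator X x * cs x)"
  proof -
    have csb: "norm (cs x) \<le> Cr" for x
    proof -
      obtain y0 where "cs x = \<phi> (x - y0)" using cs_att by blast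
      then show ?thesis using \<phi>bnd[of "x - y0"] by simp
    qed
    show ?thesis
      using integrableI_bounded_set_indicator[of X lborel cs Cr] Xfin csb by simp
  qed
  have gbnd: "\<bar>g y x\<bar> \<le> Cr + \<bar>\<tau>\<bar>" for y x
    using \<phi>bnd[of "x - y"] by (auto simp: g_def abs_le_iff)
  have Gbnd: "\<bar>G z\<bar> \<le> Cr + \<bar>\<tau>\<bar>" for z
    using \<phi>bnd[of z] by (auto simp: G_def abs_le_iff indicator_def)
  have int_g: "integrable lborel (\<lambda>x. indicator X x * g y x)" for y
    using integrableI_bounded_set_indicator[of X lborel "g y" "Cr + \<bar>\<tau>\<bar>"] Xfin gbnd by simp
  have int_G: "integrable lborel G"
  proof -
    have "integrable lborel (\<lambda>z. indicator B z *\<^sub>R (\<phi> z - \<tau>))"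
    proof -
      have nb: "norm (\<phi> z - \<tau>) \<le> Cr + \<bar>\<tau>\<bar>" for z using \<phi>bnd[of z] unfolding real_norm_def by arith
      show ?thesis
        using integrableI_bounded_set_indicator[of B lborel "\<lambda>z. \<phi> z - \<tau>" "Cr + \<bar>\<tau>\<bar>"] Bfin nb
        by simp
    qed
    then show ?thesis by (simp add: G_def[abs_def])
  qed
  have distr_y: "distr lborel borel ((+) (- y)) = lborel" for y :: 'a by (rule lborel_distr_plus)
  have int_Gy: "integrable lborel (\<lambda>x. G (x - y))" for y
  proof -
    have "integrable (distr lborel borel ((+) (- y))) G" using int_G by (simp add: distr_y)
    then show ?thesis by (subst (asm) integrable_distr_eq) auto
  qed
  have intGy: "integral\<^sup>L lborel (\<lambda>x. G (x - y)) = integral\<^sup>L lborel G" for y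
  proof -
    have "integral\<^sup>L lborel G = integral\<^sup>L (distr lborel borel ((+) (- y))) G" by (simp add: distr_y)
    also have "\<dots> = integral\<^sup>L lborel (\<lambda>x. G (- y + x))" by (rule integral_distr) auto
    finally show ?thesis by simp
  qed
  define F where "F = Fvol h N Cr ?v"
  have F_eq: "F = integral\<^sup>L lborel (\<lambda>x. indicator B x * \<phi> x)"
  proof -
    have "F = integral\<^sup>L lebesgue (\<lambda>x. indicator B x * \<phi> x)"
      unfolding F_def Fvol_def vB set_lebesgue_integral_def by (simp add: cost_def \<phi>_def)
    also have "\<dots> = integral\<^sup>L lborel (\<lambda>x. indicator B x * \<phi> x)"
      by (rule integral_completion) measurable
    finally show ?thesis .
  qed
  have int_B\<phi>: "integrable lborel (\<lambda>x. indicator B x * \<phi> x)"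
    using integrableI_bounded_set_indicator[of B lborel \<phi> Cr] Bfin \<phi>bnd by (simp add: abs_le_iff)
  have intG: "integral\<^sup>L lborel G = F - \<tau> * ?v"
  proof -
    have "integral\<^sup>L lborel G = integral\<^sup>L lborel (\<lambda>x. indicator B x * \<phi> x - \<tau> * indicator B x)"
      unfolding G_def by (rule arg_cong[where f="integral\<^sup>L lborel"]) (simp add: fun_eq_iff algebra_simps)
    also have "\<dots> = F - \<tau> * measure lborel B"
      using int_B\<phi> Bfin Bs by (subst Bochner_Integration.integral_diff) (auto simp: F_eq)
    finally show ?thesis using measB by simp
  qed
  have main: "real k * F \<le> integral\<^sup>L lborel (\<lambda>x. indicator X x * cs x)"
  proof -
    have s1: "(\<Sum>y\<in>S. integral\<^sup>L lborel (\<lambda>x. G (x - y))) = real k * (F - \<tau> * ?v)"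
      by (simp add: intGy intG assms(9))
    have s2: "real k * ?v = measure lborel X" using assms(7) measX by simp
    have "real k * F = \<tau> * (real k * ?v) + real k * (F - \<tau> * ?v)" by (simp add: algebra_simps)
    then have "real k * F = \<tau> * measure lborel X + (\<Sum>y\<in>S. integral\<^sup>L lborel (\<lambda>x. G (x - y)))"
      unfolding s1 s2 .
    also have "\<dots> \<le> \<tau> * measure lborel X + (\<Sum>y\<in>S. integral\<^sup>L lborel (\<lambda>x. indicator X x * g y x))"
      by (intro add_left_mono sum_mono Bochner_Integration.integral_mono int_Gy int_g pw2)
    also have "\<dots> = integral\<^sup>L lborel (\<lambda>x. \<tau> * indicator X x + (\<Sum>y\<in>S. indicator X x * g y x))"
    proof -
      have i1: "integrable lborel (\<lambda>x. \<tau> * indicator X x)"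
        using Xfin Xs by (intro integrable_mult_right integrable_real_indicator) auto
      have i2: "integrable lborel (\<lambda>x. \<Sum>y\<in>S. indicator X x * g y x)"
        by (intro Bochner_Integration.integrable_sum int_g)
      have e1: "integral\<^sup>L lborel (\<lambda>x. \<tau> * indicator X x) = \<tau> * measure lborel X"
        by simp
      have e2: "integral\<^sup>L lborel (\<lambda>x. \<Sum>y\<in>S. indicator X x * g y x)
          = (\<Sum>y\<in>S. integral\<^sup>L lborel (\<lambda>x. indicator X x * g y x))"
        by (rule Bochner_Integration.integral_sum[OF int_g])
      show ?thesis unfolding Bochner_Integration.integral_add[OF i1 i2] e1 e2 ..
    qed
    also have "\<dots> \<le> integral\<^sup>L lborel (\<lambda>x. indicator X x * cs x)"
    proof (rule Bochner_Integration.integral_mono)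
      show "integrable lborel (\<lambda>x. \<tau> * indicator X x + (\<Sum>y\<in>S. indicator X x * g y x))"
        using Xfin Xs by (intro Bochner_Integration.integrable_add integrable_mult_right integrable_real_indicator Bochner_Integration.integrable_sum int_g) auto
      show "integrable lborel (\<lambda>x. indicator X x * cs x)" by (rule int_cs)
      fix x
      show "\<tau> * indicator X x + (\<Sum>y\<in>S. indicator X x * g y x) \<le> indicator X x * cs x"
        using pw[of x] by (cases "x \<in> X") (auto simp: sum_distrib_left[symmetric])
    qed
    finally show ?thesis .
  qed
  have "exp_cost h N Cr lam X S = integral\<^sup>L lebesgue (\<lambda>x. lam * (indicator X x * cs x))"
    unfolding exp_cost_def set_lebesgue_integral_def cs_def by (simp add: algebra_simps)
  also have "\<dots> = integral\<^sup>L lborel (\<lambda>x. lam * (indicator X x * cs x))"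
    by (rule integral_completion) measurable
  also have "\<dots> = lam * integral\<^sup>L lborel (\<lambda>x. indicator X x * cs x)" by simp
  finally show ?thesis using main assms(6) unfolding F_def
    by (simp add: mult.assoc mult_left_mono)
qed

end
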